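(* Regard spinors as vectors in the 4-dimensional Euclidean space $(\mathrm{Cl}^+(3),(\cdot,\cdot))$ and let $I=e_1e_2e_3$. Then: (i) $\{a_1a_1=1,\ a_1a_2,\ a_1I,\ a_2I\}$ is a set of simple roots of a root system of type $A_2\oplus A_2$ contained in the $H_4$ root system $2I$; (ii) $\{a_1a_1=1,\ a_2a_3,\ a_2I,\ a_3I\}$ is a set of simple roots of a root system of type $H_2\oplus H_2$ contained in $2I$; (iii) $\{a_1a_1,\ a_1a_2,\ a_1a_3a_2a_1a_3a_2a_1a_3,\ a_3a_2a_1a_3a_2a_1a_3a_2a_3a_1a_2a_3\}$ is a set of simple roots of a root system of type $A_4$ contained in $2I$. (A set of simple roots of a given type means its Cartan matrix $A_{ij}=2(\beta_i,\beta_j)/(\beta_i,\beta_i)$ is that of the given type and the root system generated from it by the reflections $s_R(X)=-R\tilde XR$ lies in $2I$.)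
   Context: $\mathrm{Cl}(3)$ is the real Clifford algebra of Euclidean $\mathbb{R}^3$ with orthonormal basis $e_1,e_2,e_3$ ($e_i^2=1$, $e_ie_j=-e_je_i$ for $i\neq j$); all products are geometric products. The even subalgebra $\mathrm{Cl}^+(3)$ is spanned by $1,e_2e_3,e_3e_1,e_1e_2$ (spinors). Reversal $\tilde{\ }$ reverses the order of vector factors. The spinor inner product $(R_1,R_2)=\tfrac12(R_1\tilde R_2+R_2\tilde R_1)$ makes $\mathrm{Cl}^+(3)$ a 4D Euclidean space with orthonormal basis $1,e_2e_3,e_3e_1,e_1e_2$; for unit $R$, $s_R(X)=X-2(R,X)R=-R\tilde XR$. Let $\tau=\frac{1+\sqrt5}{2}$. The $H_3$ simple roots are $a_1=e_2$, $a_2=\tfrac12(-\tau e_1-e_2-(\tau-1)e_3)$, $a_3=e_1$. The binary icosahedral group $2I$ is the set of all products of an even number of factors from $\{a_1,a_2,a_3\}$ (order 120); as 120 vectors in the 4D spinor space it is the $H_4$ root system. Cartan matrices: $A_2\oplus A_2$ is block diagonal with two blocks $\begin{pmatrix}2&-1\\-1&2\end{pmatrix}$; $H_2\oplus H_2$ is block diagonal with two blocks $\begin{pmatrix}2&-\tau\\-\tau&2\end{pmatrix}$; $A_4$ is the $4\times4$ tridiagonal matrix with $2$ on the diagonal and $-1$ on the off-diagonals (up to ordering of simple roots). *)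

theory Defs
  imports Complex_Main "HOL-Combinatorics.Permutations"
begin

text \<open>Multivectors of Cl(3): coefficient functions on blades, a blade being a subset
  of {1,2,3} (the blade e_A is the product of the e_i, i in A, in increasing order).
  Coefficients of sets not contained in {1,2,3} are irrelevant and kept at 0.\<close>

type_synonym mv = "nat set \<Rightarrow> real"

definition blades :: "nat set set" where
  "blades = Pow {1,2,3}"

text \<open>Sign of e_A e_B = sign * e_(A symdiff B), using e_i^2 = 1 and anticommutation.\<close>
definition bsign :: "nat set \<Rightarrow> nat set \<Rightarrow> real" where
  "bsign A B = (-1) ^ card {(i,j). i \<in> A \<and> j \<in> B \<and> j < i}"

definition symd :: "nat set \<Rightarrow> nat set \<Rightarrow> nat set" where
  "symd A B = (A - B) \<union> (B - A)"

definition gp :: "mv \<Rightarrow> mv \<Rightarrow> mv" (infixl "\<odot>" 70) where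
  "gp x y = (\<lambda>C. if C \<in> blades
     then (\<Sum>A\<in>blades. bsign A (symd A C) * x A * y (symd A C)) else 0)"

definition mv_scalar :: "real \<Rightarrow> mv" where
  "mv_scalar c = (\<lambda>A. if A = {} then c else 0)"

definition mv_one :: mv where "mv_one = mv_scalar 1"

definition mv_add :: "mv \<Rightarrow> mv \<Rightarrow> mv" where
  "mv_add x y = (\<lambda>A. x A + y A)"

definition mv_smult :: "real \<Rightarrow> mv \<Rightarrow> mv" where
  "mv_smult c x = (\<lambda>A. c * x A)"

definition mv_neg :: "mv \<Rightarrow> mv" where
  "mv_neg x = (\<lambda>A. - x A)"

definition ev :: "nat \<Rightarrow> mv" where
  "ev i = (\<lambda>A. if A = {i} then 1 else 0)"

definition mv_rev :: "mv \<Rightarrow> mv" where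
  "mv_rev x = (\<lambda>A. (-1) ^ (card A * (card A - 1) div 2) * x A)"

definition spinors :: "mv set" where
  "spinors = {x. \<forall>A. (A \<notin> blades \<or> odd (card A)) \<longrightarrow> x A = 0}"

text \<open>Spinor inner product (R1,R2) = 1/2 (R1 ~R2 + R2 ~R1); for spinors this is a
  scalar, and we take its scalar (empty-blade) coefficient as a real number.\<close>
definition sinner :: "mv \<Rightarrow> mv \<Rightarrow> real" where
  "sinner R1 R2 = (1/2) * ((R1 \<odot> mv_rev R2) {} + (R2 \<odot> mv_rev R1) {})"

definition srefl :: "mv \<Rightarrow> mv \<Rightarrow> mv" where
  "srefl R X = mv_neg ((R \<odot> mv_rev X) \<odot> R)"

definition tau :: real where "tau = (1 + sqrt 5) / 2"

text \<open>H3 simple roots a_1, a_2, a_3.\<close>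
definition aroot :: "nat \<Rightarrow> mv" where
  "aroot k = (if k = 1 then ev 2
     else if k = 2 then mv_smult (1/2)
            (mv_add (mv_add (mv_smult (- tau) (ev 1)) (mv_neg (ev 2)))
                    (mv_smult (- (tau - 1)) (ev 3)))
     else ev 1)"

definition aword :: "nat list \<Rightarrow> mv" where
  "aword ws = foldr (\<lambda>k acc. aroot k \<odot> acc) ws mv_one"

definition pseudoI :: mv where "pseudoI = (ev 1 \<odot> ev 2) \<odot> ev 3"

text \<open>Binary icosahedral group 2I: all products of an even number of factors from
  {a_1,a_2,a_3} (the empty product 1 included).\<close>
definition binicos :: "mv set" where
  "binicos = {aword ws | ws. even (length ws) \<and> set ws \<subseteq> {1,2,3}}"

inductive_set gen_roots :: "mv set \<Rightarrow> mv set" for S :: "mv set" where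
  base: "X \<in> S \<Longrightarrow> X \<in> gen_roots S"
| refl: "R \<in> gen_roots S \<Longrightarrow> X \<in> gen_roots S \<Longrightarrow> srefl R X \<in> gen_roots S"

definition cartan :: "(nat \<Rightarrow> mv) \<Rightarrow> nat \<Rightarrow> nat \<Rightarrow> real" where
  "cartan \<beta> i j = 2 * sinner (\<beta> i) (\<beta> j) / sinner (\<beta> i) (\<beta> i)"

definition cartan_A2A2 :: "nat \<Rightarrow> nat \<Rightarrow> real" where
  "cartan_A2A2 i j =
     (if i = j then 2 else if {i,j} = {0,1} \<or> {i,j} = {2,3} then -1 else 0)"

definition cartan_H2H2 :: "nat \<Rightarrow> nat \<Rightarrow> real" where
  "cartan_H2H2 i j =
     (if i = j then 2 else if {i,j} = {0,1} \<or> {i,j} = {2,3} then - tau else 0)"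

definition cartan_A4 :: "nat \<Rightarrow> nat \<Rightarrow> real" where
  "cartan_A4 i j = (if i = j then 2 else if i = j + 1 \<or> j = i + 1 then -1 else 0)"

definition simple_roots_of_type_in_2I :: "(nat \<Rightarrow> mv) \<Rightarrow> (nat \<Rightarrow> nat \<Rightarrow> real) \<Rightarrow> bool" where
  "simple_roots_of_type_in_2I \<beta> M \<longleftrightarrow>
     (\<forall>i<4. \<beta> i \<in> spinors) \<and>
     (\<exists>p. p permutes {0..<4} \<and> (\<forall>i<4. \<forall>j<4. cartan \<beta> (p i) (p j) = M i j)) \<and>
     gen_roots (\<beta> ` {0..<4}) \<subseteq> binicos"

end

theory Submission
  imports Defs
begin

declare One_nat_def [simp del]

lemma tau_sq: "tau * tau = tau + 1"
  unfolding tau_def by (simp add: field_simps)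

lemma blades_eq: "blades = {{},{1},{2},{3},{1,2},{1,3},{2,3},{1,2,3}}"
  unfolding blades_def by (simp add: Pow_insert insert_commute image_insert)

definition BL :: "nat set list" where "BL = [{},{1},{2},{3},{1,2},{1,3},{2,3},{1,2,3}]"

lemma BL_dist: "distinct BL"
  unfolding BL_def by (simp add: doubleton_eq_iff insert_eq_iff)

lemma blades_BL: "blades = set BL" unfolding blades_eq BL_def by simp

lemma sum_blades: "sum f blades = f {} + f {1} + f {2} + f {3} + f {1,2} + f {1,3} + f {2,3} + f {1,2,3}"
proof -
  have "sum f blades = sum_list (map f BL)" unfolding blades_BL by (simp add: sum_list_distinct_conv_sum_set BL_dist)
  then show ?thesis by (simp add: BL_def add.assoc)
qed

lemma bsign_code: "finite A \<Longrightarrow> finite B \<Longrightarrow> bsign A B = (-1) ^ (\<Sum>i\<in>A. card (B \<inter> {..<i}))"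
proof -
  assume f: "finite A" "finite B"
  have "{(i,j). i \<in> A \<and> j \<in> B \<and> j < i} = Sigma A (\<lambda>i. B \<inter> {..<i})" by auto
  then show ?thesis unfolding bsign_def using f by simp
qed

lemma mem_blades: "{} \<in> blades" "{1} \<in> blades" "{2} \<in> blades" "{3} \<in> blades"
  "{1,2} \<in> blades" "{1,3} \<in> blades" "{2,3} \<in> blades" "{1,2,3} \<in> blades"
  by (simp_all add: blades_eq)

definition M :: "real \<Rightarrow> real \<Rightarrow> real \<Rightarrow> real \<Rightarrow> real \<Rightarrow> real \<Rightarrow> real \<Rightarrow> real \<Rightarrow> mv" where
  "M a0 a1 a2 a3 a4 a5 a6 a7 = (\<lambda>A. if A = {} then a0 else if A = {1} then a1
     else if A = {2} then a2 else if A = {3} then a3 else if A = {1,2} then a4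
     else if A = {1,3} then a5 else if A = {2,3} then a6 else if A = {1,2,3} then a7 else 0)"

lemma M_eval0 [simp]: "M a0 a1 a2 a3 a4 a5 a6 a7 {} = a0"
  by (simp add: M_def doubleton_eq_iff insert_eq_iff)

lemma M_eval1 [simp]: "M a0 a1 a2 a3 a4 a5 a6 a7 {1} = a1"
  by (simp add: M_def doubleton_eq_iff insert_eq_iff)

lemma M_eval2 [simp]: "M a0 a1 a2 a3 a4 a5 a6 a7 {2} = a2"
  by (simp add: M_def doubleton_eq_iff insert_eq_iff)

lemma M_eval3 [simp]: "M a0 a1 a2 a3 a4 a5 a6 a7 {3} = a3"
  by (simp add: M_def doubleton_eq_iff insert_eq_iff)

lemma M_eval4 [simp]: "M a0 a1 a2 a3 a4 a5 a6 a7 {1,2} = a4"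
  by (simp add: M_def doubleton_eq_iff insert_eq_iff)

lemma M_eval5 [simp]: "M a0 a1 a2 a3 a4 a5 a6 a7 {1,3} = a5"
  by (simp add: M_def doubleton_eq_iff insert_eq_iff)

lemma M_eval6 [simp]: "M a0 a1 a2 a3 a4 a5 a6 a7 {2,3} = a6"
  by (simp add: M_def doubleton_eq_iff insert_eq_iff)

lemma M_eval7 [simp]: "M a0 a1 a2 a3 a4 a5 a6 a7 {1,2,3} = a7"
  by (simp add: M_def doubleton_eq_iff insert_eq_iff)

lemma M_out: "C \<notin> blades \<Longrightarrow> M a0 a1 a2 a3 a4 a5 a6 a7 C = 0"
  by (auto simp: M_def blades_eq)

definition clean :: "mv \<Rightarrow> bool" where "clean x \<longleftrightarrow> (\<forall>A. A \<notin> blades \<longrightarrow> x A = 0)"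

lemma clean_eqI:
  assumes "clean x" "clean y" "x {} = y {}" "x {1} = y {1}" "x {2} = y {2}" "x {3} = y {3}" "x {1,2} = y {1,2}" "x {1,3} = y {1,3}" "x {2,3} = y {2,3}" "x {1,2,3} = y {1,2,3}"
  shows "x = y"
proof (rule ext)
  fix C
  show "x C = y C"
  proof (cases "C \<in> blades")
    case True
    then show ?thesis using assms(3-) unfolding blades_eq by auto
  next
    case False
    then show ?thesis using assms(1,2) unfolding clean_def by auto
  qed
qed

lemma clean_M [simp]: "clean (M a0 a1 a2 a3 a4 a5 a6 a7)"
  unfolding clean_def by (simp add: M_out)

lemma M_inj: "M a0 a1 a2 a3 a4 a5 a6 a7 = M b0 b1 b2 b3 b4 b5 b6 b7 \<longleftrightarrow> a0 = b0 \<and> a1 = b1 \<and> a2 = b2 \<and> a3 = b3 \<and> a4 = b4 \<and> a5 = b5 \<and> a6 = b6 \<and> a7 = b7"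
  by (metis M_eval0 M_eval1 M_eval2 M_eval3 M_eval4 M_eval5 M_eval6 M_eval7)

lemma clean_is_M: "clean x \<Longrightarrow> x = M (x {}) (x {1}) (x {2}) (x {3}) (x {1,2}) (x {1,3}) (x {2,3}) (x {1,2,3})"
  by (rule clean_eqI) simp_all

lemma gp_comp0: "(x \<odot> y) {} = x {} * y {} + x {1} * y {1} + x {2} * y {2} + x {3} * y {3} - x {1,2} * y {1,2} - x {1,3} * y {1,3} - x {2,3} * y {2,3} - x {1,2,3} * y {1,2,3}"
  by (simp add: gp_def mem_blades blades_eq[symmetric] sum_blades bsign_code symd_def insert_Diff_if Int_insert_left insert_commute)

lemma gp_comp1: "(x \<odot> y) {1} = x {} * y {1} + x {1} * y {} - x {2} * y {1,2} - x {3} * y {1,3} + x {1,2} * y {2} + x {1,3} * y {3} - x {2,3} * y {1,2,3} - x {1,2,3} * y {2,3}"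
  by (simp add: gp_def mem_blades blades_eq[symmetric] sum_blades bsign_code symd_def insert_Diff_if Int_insert_left insert_commute)

lemma gp_comp2: "(x \<odot> y) {2} = x {} * y {2} + x {1} * y {1,2} + x {2} * y {} - x {3} * y {2,3} - x {1,2} * y {1} + x {1,3} * y {1,2,3} + x {2,3} * y {3} + x {1,2,3} * y {1,3}"
  by (simp add: gp_def mem_blades blades_eq[symmetric] sum_blades bsign_code symd_def insert_Diff_if Int_insert_left insert_commute)

lemma gp_comp3: "(x \<odot> y) {3} = x {} * y {3} + x {1} * y {1,3} + x {2} * y {2,3} + x {3} * y {} - x {1,2} * y {1,2,3} - x {1,3} * y {1} - x {2,3} * y {2} - x {1,2,3} * y {1,2}"
  by (simp add: gp_def mem_blades blades_eq[symmetric] sum_blades bsign_code symd_def insert_Diff_if Int_insert_left insert_commute)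

lemma gp_comp4: "(x \<odot> y) {1,2} = x {} * y {1,2} + x {1} * y {2} - x {2} * y {1} + x {3} * y {1,2,3} + x {1,2} * y {} - x {1,3} * y {2,3} + x {2,3} * y {1,3} + x {1,2,3} * y {3}"
  by (simp add: gp_def mem_blades blades_eq[symmetric] sum_blades bsign_code symd_def insert_Diff_if Int_insert_left insert_commute)

lemma gp_comp5: "(x \<odot> y) {1,3} = x {} * y {1,3} + x {1} * y {3} - x {2} * y {1,2,3} - x {3} * y {1} + x {1,2} * y {2,3} + x {1,3} * y {} - x {2,3} * y {1,2} - x {1,2,3} * y {2}"
  by (simp add: gp_def mem_blades blades_eq[symmetric] sum_blades bsign_code symd_def insert_Diff_if Int_insert_left insert_commute)

lemma gp_comp6: "(x \<odot> y) {2,3} = x {} * y {2,3} + x {1} * y {1,2,3} + x {2} * y {3} - x {3} * y {2} - x {1,2} * y {1,3} + x {1,3} * y {1,2} + x {2,3} * y {} + x {1,2,3} * y {1}"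
  by (simp add: gp_def mem_blades blades_eq[symmetric] sum_blades bsign_code symd_def insert_Diff_if Int_insert_left insert_commute)

lemma gp_comp7: "(x \<odot> y) {1,2,3} = x {} * y {1,2,3} + x {1} * y {2,3} - x {2} * y {1,3} + x {3} * y {1,2} + x {1,2} * y {3} - x {1,3} * y {2} + x {2,3} * y {1} + x {1,2,3} * y {}"
  by (simp add: gp_def mem_blades blades_eq[symmetric] sum_blades bsign_code symd_def insert_Diff_if Int_insert_left insert_commute)

lemma gp_out: "C \<notin> blades \<Longrightarrow> (x \<odot> y) C = 0"
  by (simp add: gp_def)

lemma clean_gp [simp]: "clean (x \<odot> y)"
  unfolding clean_def by (simp add: gp_out)

lemma gp_expand: "x \<odot> y = M (x {} * y {} + x {1} * y {1} + x {2} * y {2} + x {3} * y {3} - x {1,2} * y {1,2} - x {1,3} * y {1,3} - x {2,3} * y {2,3} - x {1,2,3} * y {1,2,3}) (x {} * y {1} + x {1} * y {} - x {2} * y {1,2} - x {3} * y {1,3} + x {1,2} * y {2} + x {1,3} * y {3} - x {2,3} * y {1,2,3} - x {1,2,3} * y {2,3}) (x {} * y {2} + x {1} * y {1,2} + x {2} * y {} - x {3} * y {2,3} - x {1,2} * y {1} + x {1,3} * y {1,2,3} + x {2,3} * y {3} + x {1,2,3} * y {1,3}) (x {} * y {3} + x {1} * y {1,3} + x {2} * y {2,3} + x {3} * y {} - x {1,2} * y {1,2,3} - x {1,3} * y {1} - x {2,3} * y {2} - x {1,2,3} * y {1,2}) (x {} * y {1,2} + x {1} * y {2} - x {2} * y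 {1} + x {3} * y {1,2,3} + x {1,2} * y {} - x {1,3} * y {2,3} + x {2,3} * y {1,3} + x {1,2,3} * y {3}) (x {} * y {1,3} + x {1} * y {3} - x {2} * y {1,2,3} - x {3} * y {1} + x {1,2} * y {2,3} + x {1,3} * y {} - x {2,3} * y {1,2} - x {1,2,3} * y {2}) (x {} * y {2,3} + x {1} * y {1,2,3} + x {2} * y {3} - x {3} * y {2} - x {1,2} * y {1,3} + x {1,3} * y {1,2} + x {2,3} * y {} + x {1,2,3} * y {1}) (x {} * y {1,2,3} + x {1} * y {2,3} - x {2} * y {1,3} + x {3} * y {1,2} + x {1,2} * y {3} - x {1,3} * y {2} + x {2,3} * y {1} + x {1,2,3} * y {})"
  by (rule clean_eqI) (simp_all only: clean_gp clean_M M_eval0 M_eval1 M_eval2 M_eval3 M_eval4 M_eval5 M_eval6 M_eval7 gp_comp0 gp_comp1 gp_comp2 gp_comp3 gp_comp4 gp_comp5 gp_comp6 gp_comp7)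

lemma gp_assoc: "(x \<odot> y) \<odot> z = x \<odot> (y \<odot> z)"
  by (simp add: gp_expand M_inj algebra_simps)

lemma rev_eval [simp]:
  "mv_rev x {} = x {}" "mv_rev x {1} = x {1}" "mv_rev x {2} = x {2}" "mv_rev x {3} = x {3}"
  "mv_rev x {1,2} = - x {1,2}" "mv_rev x {1,3} = - x {1,3}" "mv_rev x {2,3} = - x {2,3}"
  "mv_rev x {1,2,3} = - x {1,2,3}"
  by (simp_all add: mv_rev_def)

lemma neg_eval [simp]:
  "mv_neg x {} = - x {}" "mv_neg x {1} = - x {1}" "mv_neg x {2} = - x {2}" "mv_neg x {3} = - x {3}"
  "mv_neg x {1,2} = - x {1,2}" "mv_neg x {1,3} = - x {1,3}" "mv_neg x {2,3} = - x {2,3}"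
  "mv_neg x {1,2,3} = - x {1,2,3}"
  by (simp_all add: mv_neg_def)

lemma clean_rev [simp]: "clean x \<Longrightarrow> clean (mv_rev x)"
  unfolding clean_def mv_rev_def by simp

lemma clean_neg [simp]: "clean x \<Longrightarrow> clean (mv_neg x)"
  unfolding clean_def mv_neg_def by simp

lemma rev_M: "mv_rev (M a0 a1 a2 a3 a4 a5 a6 a7) = M a0 a1 a2 a3 (-a4) (-a5) (-a6) (-a7)"
  by (rule clean_eqI) simp_all

lemma neg_M: "mv_neg (M a0 a1 a2 a3 a4 a5 a6 a7) = M (-a0) (-a1) (-a2) (-a3) (-a4) (-a5) (-a6) (-a7)"
  by (rule clean_eqI) simp_all

lemma gp_M: "M a0 a1 a2 a3 a4 a5 a6 a7 \<odot> M b0 b1 b2 b3 b4 b5 b6 b7 =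
  M (a0 * b0 + a1 * b1 + a2 * b2 + a3 * b3 - a4 * b4 - a5 * b5 - a6 * b6 - a7 * b7)
    (a0 * b1 + a1 * b0 - a2 * b4 - a3 * b5 + a4 * b2 + a5 * b3 - a6 * b7 - a7 * b6)
    (a0 * b2 + a1 * b4 + a2 * b0 - a3 * b6 - a4 * b1 + a5 * b7 + a6 * b3 + a7 * b5)
    (a0 * b3 + a1 * b5 + a2 * b6 + a3 * b0 - a4 * b7 - a5 * b1 - a6 * b2 - a7 * b4)
    (a0 * b4 + a1 * b2 - a2 * b1 + a3 * b7 + a4 * b0 - a5 * b6 + a6 * b5 + a7 * b3)
    (a0 * b5 + a1 * b3 - a2 * b7 - a3 * b1 + a4 * b6 + a5 * b0 - a6 * b4 - a7 * b2)
    (a0 * b6 + a1 * b7 + a2 * b3 - a3 * b2 - a4 * b5 + a5 * b4 + a6 * b0 + a7 * b1)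
    (a0 * b7 + a1 * b6 - a2 * b5 + a3 * b4 + a4 * b3 - a5 * b2 + a6 * b1 + a7 * b0)"
  by (simp add: gp_expand)

lemma rev_gp: "mv_rev (x \<odot> y) = mv_rev y \<odot> mv_rev x"
  by (simp add: gp_expand rev_M M_inj algebra_simps)

lemma one_M: "mv_one = M 1 0 0 0 0 0 0 0"
  by (rule ext) (simp add: mv_one_def mv_scalar_def M_def)

lemma one_gp: "clean y \<Longrightarrow> mv_one \<odot> y = y"
  by (rule clean_eqI) (simp_all add: one_M gp_expand)

lemma gp_one: "clean y \<Longrightarrow> y \<odot> mv_one = y"
  by (rule clean_eqI) (simp_all add: one_M gp_expand)

lemma ev_M: "ev 1 = M 0 1 0 0 0 0 0 0" "ev 2 = M 0 0 1 0 0 0 0 0" "ev 3 = M 0 0 0 1 0 0 0 0"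
  by (auto simp: ev_def M_def fun_eq_iff)

lemma aroot_M: "aroot 1 = M 0 0 1 0 0 0 0 0"
  "aroot 2 = M 0 (- tau / 2) (- 1 / 2) (- (tau - 1) / 2) 0 0 0 0"
  "aroot 3 = M 0 1 0 0 0 0 0 0"
  by (auto simp: aroot_def ev_M mv_smult_def mv_add_def mv_neg_def M_def fun_eq_iff)

lemma aroot_cases: "aroot k = aroot 1 \<or> aroot k = aroot 2 \<or> aroot k = aroot 3"
  by (simp add: aroot_def)

lemma clean_aroot [simp]: "clean (aroot k)"
  using aroot_cases[of k] by (auto simp: aroot_M)

lemma rev_aroot [simp]: "mv_rev (aroot k) = aroot k"
  using aroot_cases[of k] by (auto simp: aroot_M rev_M)

lemma pseudoI_M: "pseudoI = M 0 0 0 0 0 0 0 1"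
  by (simp add: pseudoI_def ev_M gp_M)

lemma aword_Nil: "aword [] = mv_one" by (simp add: aword_def)
lemma aword_Cons: "aword (k # ws) = aroot k \<odot> aword ws" by (simp add: aword_def)

lemma clean_one [simp]: "clean mv_one" by (simp add: one_M)

lemma clean_aword [simp]: "clean (aword ws)"
  by (cases ws) (simp_all add: aword_Nil aword_Cons)

lemma aword_append: "aword (xs @ ys) = aword xs \<odot> aword ys"
  by (induction xs) (simp_all add: aword_Nil aword_Cons one_gp gp_assoc)

lemma aword_single: "aword [k] = aroot k"
  by (simp add: aword_Cons aword_Nil gp_one)

lemma rev_one: "mv_rev mv_one = mv_one" by (simp add: one_M rev_M)

lemma rev_aword: "mv_rev (aword ws) = aword (rev ws)"
  by (induction ws) (simp_all add: aword_Nil aword_Cons rev_one rev_gp aword_append aword_single gp_one)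

lemma aword_m1: "aword [1,3,1,3] = M (-1) 0 0 0 0 0 0 0"
  by (simp add: aword_Cons aword_Nil aroot_M one_M gp_M)

lemma neg_gp: "mv_neg (x \<odot> y) = aword [1,3,1,3] \<odot> (x \<odot> y)"
  by (rule clean_eqI) (simp_all add: aword_m1 gp_expand)

lemma srefl_aword: "srefl (aword r) (aword x) = aword ([1,3,1,3] @ r @ rev x @ r)"
proof -
  have "aword ([1,3,1,3] @ r @ rev x @ r) = aword [1,3,1,3] \<odot> (aword r \<odot> (aword (rev x) \<odot> aword r))"
    by (simp only: aword_append)
  then show ?thesis unfolding srefl_def by (simp add: rev_aword neg_gp gp_assoc)
qed

lemma binicos_srefl: "R \<in> binicos \<Longrightarrow> X \<in> binicos \<Longrightarrow> srefl R X \<in> binicos"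
proof -
  assume "R \<in> binicos" "X \<in> binicos"
  then obtain r x where r: "R = aword r" "even (length r)" "set r \<subseteq> {1,2,3}"
    and x: "X = aword x" "even (length x)" "set x \<subseteq> {1,2,3}"
    unfolding binicos_def by blast
  show ?thesis unfolding binicos_def using r x
    by (intro CollectI exI[of _ "[1,3,1,3] @ r @ rev x @ r"]) (simp add: srefl_aword)
qed

lemma gen_roots_sub: "S \<subseteq> binicos \<Longrightarrow> gen_roots S \<subseteq> binicos"
proof
  fix X assume S: "S \<subseteq> binicos" and X: "X \<in> gen_roots S"
  from X show "X \<in> binicos"
    by (induction rule: gen_roots.induct) (use S in \<open>auto intro: binicos_srefl\<close>)
qed

lemma sinner_M: "sinner (M a0 a1 a2 a3 a4 a5 a6 a7) (M b0 b1 b2 b3 b4 b5 b6 b7) =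
  a0*b0 + a1*b1 + a2*b2 + a3*b3 + a4*b4 + a5*b5 + a6*b6 + a7*b7"
  by (simp add: sinner_def rev_M gp_M algebra_simps)

lemma spinor_M: "M a0 0 0 0 a4 a5 a6 0 \<in> spinors"
  unfolding spinors_def
proof (intro CollectI allI impI)
  fix A assume h: "A \<notin> blades \<or> odd (card A)"
  show "M a0 0 0 0 a4 a5 a6 0 A = 0"
  proof (cases "A \<in> blades")
    case True
    then show ?thesis using h unfolding blades_eq by auto
  qed (simp add: M_out)
qed

lemma all4: "(\<forall>i<(4::nat). P i) \<longleftrightarrow> P 0 \<and> P 1 \<and> P 2 \<and> P 3"
  by (auto simp: less_Suc_eq numeral_eq_Suc One_nat_def)

lemma id_perm: "id permutes {0..<(4::nat)}" by (rule permutes_id)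

lemma aword_bin: "even (length ws) \<Longrightarrow> set ws \<subseteq> {1,2,3} \<Longrightarrow> aword ws \<in> binicos"
  unfolding binicos_def by blast

lemma img4: "f ` {0..<(4::nat)} = {f 0, f 1, f 2, f 3}"
  by (simp add: atLeast0LessThan lessThan_Suc numeral_eq_Suc One_nat_def insert_commute)

lemma tau_sq2: "tau * (tau * x) = tau * x + x" using tau_sq by (metis distrib_right mult.assoc mult_1)

lemma w_1: "aword [1] = M 0 0 (1) 0 0 0 0 0"
  by (simp only: aword_single aroot_M, (simp add: M_inj field_simps tau_sq tau_sq2)?)

lemma w_11: "aword [1,1] = M (1) 0 0 0 0 0 0 0"
  by (simp only: aword_Cons[of 1 "[1]"] w_1 aroot_M gp_M) (simp add: M_inj field_simps tau_sq tau_sq2)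

lemma w_2: "aword [2] = M 0 (- 1/2 * tau) (- 1/2) (1/2 - 1/2 * tau) 0 0 0 0"
  by (simp only: aword_single aroot_M, (simp add: M_inj field_simps tau_sq tau_sq2)?)

lemma w_12: "aword [1,2] = M (- 1/2) 0 0 0 (1/2 * tau) 0 (1/2 - 1/2 * tau) 0"
  by (simp only: aword_Cons[of 1 "[2]"] w_2 aroot_M gp_M) (simp add: M_inj field_simps tau_sq tau_sq2)

lemma w_3: "aword [3] = M 0 (1) 0 0 0 0 0 0"
  by (simp only: aword_single aroot_M, (simp add: M_inj field_simps tau_sq tau_sq2)?)

lemma w_23: "aword [2,3] = M (- 1/2 * tau) 0 0 0 (1/2) (- 1/2 + 1/2 * tau) 0 0"
  by (simp only: aword_Cons[of 2 "[3]"] w_3 aroot_M gp_M) (simp add: M_inj field_simps tau_sq tau_sq2)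

lemma w_13: "aword [1,3] = M 0 0 0 0 (- 1) 0 0 0"
  by (simp only: aword_Cons[of 1 "[3]"] w_3 aroot_M gp_M) (simp add: M_inj field_simps tau_sq tau_sq2)

lemma w_213: "aword [2,1,3] = M 0 (- 1/2) (1/2 * tau) 0 0 0 0 (- 1/2 + 1/2 * tau)"
  by (simp only: aword_Cons[of 2 "[1,3]"] w_13 aroot_M gp_M) (simp add: M_inj field_simps tau_sq tau_sq2)

lemma w_3213: "aword [3,2,1,3] = M (- 1/2) 0 0 0 (1/2 * tau) 0 (- 1/2 + 1/2 * tau) 0"
  by (simp only: aword_Cons[of 3 "[2,1,3]"] w_213 aroot_M gp_M) (simp add: M_inj field_simps tau_sq tau_sq2)

lemma w_13213: "aword [1,3,2,1,3] = M 0 (- 1/2 * tau) (- 1/2) (- 1/2 + 1/2 * tau) 0 0 0 0"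
  by (simp only: aword_Cons[of 1 "[3,2,1,3]"] w_3213 aroot_M gp_M) (simp add: M_inj field_simps tau_sq tau_sq2)

lemma w_213213: "aword [2,1,3,2,1,3] = M (1/2 * tau) 0 0 0 0 (- 1/2) (1/2 - 1/2 * tau) 0"
  by (simp only: aword_Cons[of 2 "[1,3,2,1,3]"] w_13213 aroot_M gp_M) (simp add: M_inj field_simps tau_sq tau_sq2)

lemma w_3213213: "aword [3,2,1,3,2,1,3] = M 0 (1/2 * tau) 0 (- 1/2) 0 0 0 (1/2 - 1/2 * tau)"
  by (simp only: aword_Cons[of 3 "[2,1,3,2,1,3]"] w_213213 aroot_M gp_M) (simp add: M_inj field_simps tau_sq tau_sq2)

lemma w_13213213: "aword [1,3,2,1,3,2,1,3] = M 0 0 0 0 (- 1/2 * tau) (- 1/2 + 1/2 * tau) (- 1/2) 0"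
  by (simp only: aword_Cons[of 1 "[3,2,1,3,2,1,3]"] w_3213213 aroot_M gp_M) (simp add: M_inj field_simps tau_sq tau_sq2)

lemma w_123: "aword [1,2,3] = M 0 (- 1/2) (- 1/2 * tau) 0 0 0 0 (1/2 - 1/2 * tau)"
  by (simp only: aword_Cons[of 1 "[2,3]"] w_23 aroot_M gp_M) (simp add: M_inj field_simps tau_sq tau_sq2)

lemma w_3123: "aword [3,1,2,3] = M (- 1/2) 0 0 0 (- 1/2 * tau) 0 (1/2 - 1/2 * tau) 0"
  by (simp only: aword_Cons[of 3 "[1,2,3]"] w_123 aroot_M gp_M) (simp add: M_inj field_simps tau_sq tau_sq2)

lemma w_23123: "aword [2,3,1,2,3] = M 0 0 (1/2 * tau) (- 1/2 + 1/2 * tau) 0 0 0 (1/2)"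
  by (simp only: aword_Cons[of 2 "[3,1,2,3]"] w_3123 aroot_M gp_M) (simp add: M_inj field_simps tau_sq tau_sq2)

lemma w_323123: "aword [3,2,3,1,2,3] = M 0 0 0 0 (1/2 * tau) (- 1/2 + 1/2 * tau) (1/2) 0"
  by (simp only: aword_Cons[of 3 "[2,3,1,2,3]"] w_23123 aroot_M gp_M) (simp add: M_inj field_simps tau_sq tau_sq2)

lemma w_1323123: "aword [1,3,2,3,1,2,3] = M 0 (- 1/2 * tau) 0 (1/2) 0 0 0 (1/2 - 1/2 * tau)"
  by (simp only: aword_Cons[of 1 "[3,2,3,1,2,3]"] w_323123 aroot_M gp_M) (simp add: M_inj field_simps tau_sq tau_sq2)

lemma w_21323123: "aword [2,1,3,2,3,1,2,3] = M (1/2) 0 0 0 (1/2 - 1/2 * tau) (- 1/2 * tau) 0 0"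
  by (simp only: aword_Cons[of 2 "[1,3,2,3,1,2,3]"] w_1323123 aroot_M gp_M) (simp add: M_inj field_simps tau_sq tau_sq2)

lemma w_321323123: "aword [3,2,1,3,2,3,1,2,3] = M 0 (1/2) (1/2 - 1/2 * tau) (- 1/2 * tau) 0 0 0 0"
  by (simp only: aword_Cons[of 3 "[2,1,3,2,3,1,2,3]"] w_21323123 aroot_M gp_M) (simp add: M_inj field_simps tau_sq tau_sq2)

lemma w_1321323123: "aword [1,3,2,1,3,2,3,1,2,3] = M (1/2 - 1/2 * tau) 0 0 0 (- 1/2) 0 (- 1/2 * tau) 0"
  by (simp only: aword_Cons[of 1 "[3,2,1,3,2,3,1,2,3]"] w_321323123 aroot_M gp_M) (simp add: M_inj field_simps tau_sq tau_sq2)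

lemma w_21321323123: "aword [2,1,3,2,1,3,2,3,1,2,3] = M 0 0 (- 1/2 + 1/2 * tau) (1/2) 0 0 0 (1/2 * tau)"
  by (simp only: aword_Cons[of 2 "[1,3,2,1,3,2,3,1,2,3]"] w_1321323123 aroot_M gp_M) (simp add: M_inj field_simps tau_sq tau_sq2)

lemma w_321321323123: "aword [3,2,1,3,2,1,3,2,3,1,2,3] = M 0 0 0 0 (- 1/2 + 1/2 * tau) (1/2) (1/2 * tau) 0"
  by (simp only: aword_Cons[of 3 "[2,1,3,2,1,3,2,3,1,2,3]"] w_21321323123 aroot_M gp_M) (simp add: M_inj field_simps tau_sq tau_sq2)

lemma w_1321321323123: "aword [1,3,2,1,3,2,1,3,2,3,1,2,3] = M 0 (1/2 - 1/2 * tau) 0 (1/2 * tau) 0 0 0 (- 1/2)"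
  by (simp only: aword_Cons[of 1 "[3,2,1,3,2,1,3,2,3,1,2,3]"] w_321321323123 aroot_M gp_M) (simp add: M_inj field_simps tau_sq tau_sq2)

lemma w_21321321323123: "aword [2,1,3,2,1,3,2,1,3,2,3,1,2,3] = M 0 0 0 0 0 (- 1) 0 0"
  by (simp only: aword_Cons[of 2 "[1,3,2,1,3,2,1,3,2,3,1,2,3]"] w_1321321323123 aroot_M gp_M) (simp add: M_inj field_simps tau_sq tau_sq2)

lemma w_2321321323123: "aword [2,3,2,1,3,2,1,3,2,3,1,2,3] = M 0 (- 1/2 + 1/2 * tau) 0 (- 1/2 * tau) 0 0 0 (- 1/2)"
  by (simp only: aword_Cons[of 2 "[3,2,1,3,2,1,3,2,3,1,2,3]"] w_321321323123 aroot_M gp_M) (simp add: M_inj field_simps tau_sq tau_sq2)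

lemma w_12321321323123: "aword [1,2,3,2,1,3,2,1,3,2,3,1,2,3] = M 0 0 0 0 (1/2 - 1/2 * tau) (1/2) (- 1/2 * tau) 0"
  by (simp only: aword_Cons[of 1 "[2,3,2,1,3,2,1,3,2,3,1,2,3]"] w_2321321323123 aroot_M gp_M) (simp add: M_inj field_simps tau_sq tau_sq2)

lemma w_312: "aword [3,1,2] = M 0 (- 1/2) (1/2 * tau) 0 0 0 0 (1/2 - 1/2 * tau)"
  by (simp only: aword_Cons[of 3 "[1,2]"] w_12 aroot_M gp_M) (simp add: M_inj field_simps tau_sq tau_sq2)

lemma w_2312: "aword [2,3,1,2] = M 0 0 0 0 (- 1/2 * tau) (1/2 - 1/2 * tau) (1/2) 0"
  by (simp only: aword_Cons[of 2 "[3,1,2]"] w_312 aroot_M gp_M) (simp add: M_inj field_simps tau_sq tau_sq2)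

lemma w_32312: "aword [3,2,3,1,2] = M 0 0 (- 1/2 * tau) (1/2 - 1/2 * tau) 0 0 0 (1/2)"
  by (simp only: aword_Cons[of 3 "[2,3,1,2]"] w_2312 aroot_M gp_M) (simp add: M_inj field_simps tau_sq tau_sq2)

lemma w_132312: "aword [1,3,2,3,1,2] = M (- 1/2 * tau) 0 0 0 0 (- 1/2) (1/2 - 1/2 * tau) 0"
  by (simp only: aword_Cons[of 1 "[3,2,3,1,2]"] w_32312 aroot_M gp_M) (simp add: M_inj field_simps tau_sq tau_sq2)

lemma w_2132312: "aword [2,1,3,2,3,1,2] = M 0 (1/2) (- 1/2 + 1/2 * tau) (1/2 * tau) 0 0 0 0"
  by (simp only: aword_Cons[of 2 "[1,3,2,3,1,2]"] w_132312 aroot_M gp_M) (simp add: M_inj field_simps tau_sq tau_sq2)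

lemma w_32132312: "aword [3,2,1,3,2,3,1,2] = M (1/2) 0 0 0 (- 1/2 + 1/2 * tau) (1/2 * tau) 0 0"
  by (simp only: aword_Cons[of 3 "[2,1,3,2,3,1,2]"] w_2132312 aroot_M gp_M) (simp add: M_inj field_simps tau_sq tau_sq2)

lemma w_132132312: "aword [1,3,2,1,3,2,3,1,2] = M 0 (1/2 - 1/2 * tau) (1/2) 0 0 0 0 (- 1/2 * tau)"
  by (simp only: aword_Cons[of 1 "[3,2,1,3,2,3,1,2]"] w_32132312 aroot_M gp_M) (simp add: M_inj field_simps tau_sq tau_sq2)

lemma w_2132132312: "aword [2,1,3,2,1,3,2,3,1,2] = M 0 0 0 0 (1/2 - 1/2 * tau) (- 1/2) (1/2 * tau) 0"
  by (simp only: aword_Cons[of 2 "[1,3,2,1,3,2,3,1,2]"] w_132132312 aroot_M gp_M) (simp add: M_inj field_simps tau_sq tau_sq2)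

lemma w_32132132312: "aword [3,2,1,3,2,1,3,2,3,1,2] = M 0 0 (1/2 - 1/2 * tau) (- 1/2) 0 0 0 (1/2 * tau)"
  by (simp only: aword_Cons[of 3 "[2,1,3,2,1,3,2,3,1,2]"] w_2132132312 aroot_M gp_M) (simp add: M_inj field_simps tau_sq tau_sq2)

lemma w_132132132312: "aword [1,3,2,1,3,2,1,3,2,3,1,2] = M (1/2 - 1/2 * tau) 0 0 0 0 (- 1/2 * tau) (- 1/2) 0"
  by (simp only: aword_Cons[of 1 "[3,2,1,3,2,1,3,2,3,1,2]"] w_32132132312 aroot_M gp_M) (simp add: M_inj field_simps tau_sq tau_sq2)

lemma w_2132132132312: "aword [2,1,3,2,1,3,2,1,3,2,3,1,2] = M 0 0 0 (1) 0 0 0 0"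
  by (simp only: aword_Cons[of 2 "[1,3,2,1,3,2,1,3,2,3,1,2]"] w_132132132312 aroot_M gp_M) (simp add: M_inj field_simps tau_sq tau_sq2)

lemma w_12132132132312: "aword [1,2,1,3,2,1,3,2,1,3,2,3,1,2] = M 0 0 0 0 0 0 (1) 0"
  by (simp only: aword_Cons[of 1 "[2,1,3,2,1,3,2,1,3,2,3,1,2]"] w_2132132132312 aroot_M gp_M) (simp add: M_inj field_simps tau_sq tau_sq2)

lemma w_313: "aword [3,1,3] = M 0 0 (- 1) 0 0 0 0 0"
  by (simp only: aword_Cons[of 3 "[1,3]"] w_13 aroot_M gp_M) (simp add: M_inj field_simps tau_sq tau_sq2)

lemma w_1313: "aword [1,3,1,3] = M (- 1) 0 0 0 0 0 0 0"
  by (simp only: aword_Cons[of 1 "[3,1,3]"] w_313 aroot_M gp_M) (simp add: M_inj field_simps tau_sq tau_sq2)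

lemma aI1: "aroot 1 \<odot> pseudoI = M 0 0 0 0 0 (- 1) 0 0"
  by (simp add: aroot_M pseudoI_M gp_M M_inj field_simps)

lemma aI1_bin: "aroot 1 \<odot> pseudoI \<in> binicos"
  unfolding aI1 w_21321321323123[symmetric] by (rule aword_bin) simp_all

lemma aI2: "aroot 2 \<odot> pseudoI = M 0 0 0 0 (1/2 - 1/2 * tau) (1/2) (- 1/2 * tau) 0"
  by (simp add: aroot_M pseudoI_M gp_M M_inj field_simps)

lemma aI2_bin: "aroot 2 \<odot> pseudoI \<in> binicos"
  unfolding aI2 w_12321321323123[symmetric] by (rule aword_bin) simp_all

lemma aI3: "aroot 3 \<odot> pseudoI = M 0 0 0 0 0 0 (1) 0"
  by (simp add: aroot_M pseudoI_M gp_M M_inj field_simps)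

lemma aI3_bin: "aroot 3 \<odot> pseudoI \<in> binicos"
  unfolding aI3 w_12132132132312[symmetric] by (rule aword_bin) simp_all

lemma sA00: "sinner (aword [1,1]) (aword [1,1]) = (1)"
  by (simp add: w_13213213 w_12 aI3 aI2 w_23 w_11 w_321321323123 aI1 sinner_M field_simps tau_sq tau_sq2)

lemma sA01: "sinner (aword [1,1]) (aword [1,2]) = (- 1/2)"
  by (simp add: w_13213213 w_12 aI3 aI2 w_23 w_11 w_321321323123 aI1 sinner_M field_simps tau_sq tau_sq2)

lemma sA02: "sinner (aword [1,1]) (aroot 1 \<odot> pseudoI) = 0"
  by (simp add: w_13213213 w_12 aI3 aI2 w_23 w_11 w_321321323123 aI1 sinner_M field_simps tau_sq tau_sq2)

lemma sA03: "sinner (aword [1,1]) (aroot 2 \<odot> pseudoI) = 0"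
  by (simp add: w_13213213 w_12 aI3 aI2 w_23 w_11 w_321321323123 aI1 sinner_M field_simps tau_sq tau_sq2)

lemma sA10: "sinner (aword [1,2]) (aword [1,1]) = (- 1/2)"
  by (simp add: w_13213213 w_12 aI3 aI2 w_23 w_11 w_321321323123 aI1 sinner_M field_simps tau_sq tau_sq2)

lemma sA11: "sinner (aword [1,2]) (aword [1,2]) = (1)"
  by (simp add: w_13213213 w_12 aI3 aI2 w_23 w_11 w_321321323123 aI1 sinner_M field_simps tau_sq tau_sq2)

lemma sA12: "sinner (aword [1,2]) (aroot 1 \<odot> pseudoI) = 0"
  by (simp add: w_13213213 w_12 aI3 aI2 w_23 w_11 w_321321323123 aI1 sinner_M field_simps tau_sq tau_sq2)

lemma sA13: "sinner (aword [1,2]) (aroot 2 \<odot> pseudoI) = 0"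
  by (simp add: w_13213213 w_12 aI3 aI2 w_23 w_11 w_321321323123 aI1 sinner_M field_simps tau_sq tau_sq2)

lemma sA20: "sinner (aroot 1 \<odot> pseudoI) (aword [1,1]) = 0"
  by (simp add: w_13213213 w_12 aI3 aI2 w_23 w_11 w_321321323123 aI1 sinner_M field_simps tau_sq tau_sq2)

lemma sA21: "sinner (aroot 1 \<odot> pseudoI) (aword [1,2]) = 0"
  by (simp add: w_13213213 w_12 aI3 aI2 w_23 w_11 w_321321323123 aI1 sinner_M field_simps tau_sq tau_sq2)

lemma sA22: "sinner (aroot 1 \<odot> pseudoI) (aroot 1 \<odot> pseudoI) = (1)"
  by (simp add: w_13213213 w_12 aI3 aI2 w_23 w_11 w_321321323123 aI1 sinner_M field_simps tau_sq tau_sq2)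

lemma sA23: "sinner (aroot 1 \<odot> pseudoI) (aroot 2 \<odot> pseudoI) = (- 1/2)"
  by (simp add: w_13213213 w_12 aI3 aI2 w_23 w_11 w_321321323123 aI1 sinner_M field_simps tau_sq tau_sq2)

lemma sA30: "sinner (aroot 2 \<odot> pseudoI) (aword [1,1]) = 0"
  by (simp add: w_13213213 w_12 aI3 aI2 w_23 w_11 w_321321323123 aI1 sinner_M field_simps tau_sq tau_sq2)

lemma sA31: "sinner (aroot 2 \<odot> pseudoI) (aword [1,2]) = 0"
  by (simp add: w_13213213 w_12 aI3 aI2 w_23 w_11 w_321321323123 aI1 sinner_M field_simps tau_sq tau_sq2)

lemma sA32: "sinner (aroot 2 \<odot> pseudoI) (aroot 1 \<odot> pseudoI) = (- 1/2)"
  by (simp add: w_13213213 w_12 aI3 aI2 w_23 w_11 w_321321323123 aI1 sinner_M field_simps tau_sq tau_sq2)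

lemma sA33: "sinner (aroot 2 \<odot> pseudoI) (aroot 2 \<odot> pseudoI) = (1)"
  by (simp add: w_13213213 w_12 aI3 aI2 w_23 w_11 w_321321323123 aI1 sinner_M field_simps tau_sq tau_sq2)

lemma sH00: "sinner (aword [1,1]) (aword [1,1]) = (1)"
  by (simp add: w_13213213 w_12 aI3 aI2 w_23 w_11 w_321321323123 aI1 sinner_M field_simps tau_sq tau_sq2)

lemma sH01: "sinner (aword [1,1]) (aword [2,3]) = (- 1/2 * tau)"
  by (simp add: w_13213213 w_12 aI3 aI2 w_23 w_11 w_321321323123 aI1 sinner_M field_simps tau_sq tau_sq2)

lemma sH02: "sinner (aword [1,1]) (aroot 2 \<odot> pseudoI) = 0"
  by (simp add: w_13213213 w_12 aI3 aI2 w_23 w_11 w_321321323123 aI1 sinner_M field_simps tau_sq tau_sq2)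

lemma sH03: "sinner (aword [1,1]) (aroot 3 \<odot> pseudoI) = 0"
  by (simp add: w_13213213 w_12 aI3 aI2 w_23 w_11 w_321321323123 aI1 sinner_M field_simps tau_sq tau_sq2)

lemma sH10: "sinner (aword [2,3]) (aword [1,1]) = (- 1/2 * tau)"
  by (simp add: w_13213213 w_12 aI3 aI2 w_23 w_11 w_321321323123 aI1 sinner_M field_simps tau_sq tau_sq2)

lemma sH11: "sinner (aword [2,3]) (aword [2,3]) = (1)"
  by (simp add: w_13213213 w_12 aI3 aI2 w_23 w_11 w_321321323123 aI1 sinner_M field_simps tau_sq tau_sq2)

lemma sH12: "sinner (aword [2,3]) (aroot 2 \<odot> pseudoI) = 0"
  by (simp add: w_13213213 w_12 aI3 aI2 w_23 w_11 w_321321323123 aI1 sinner_M field_simps tau_sq tau_sq2)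

lemma sH13: "sinner (aword [2,3]) (aroot 3 \<odot> pseudoI) = 0"
  by (simp add: w_13213213 w_12 aI3 aI2 w_23 w_11 w_321321323123 aI1 sinner_M field_simps tau_sq tau_sq2)

lemma sH20: "sinner (aroot 2 \<odot> pseudoI) (aword [1,1]) = 0"
  by (simp add: w_13213213 w_12 aI3 aI2 w_23 w_11 w_321321323123 aI1 sinner_M field_simps tau_sq tau_sq2)

lemma sH21: "sinner (aroot 2 \<odot> pseudoI) (aword [2,3]) = 0"
  by (simp add: w_13213213 w_12 aI3 aI2 w_23 w_11 w_321321323123 aI1 sinner_M field_simps tau_sq tau_sq2)

lemma sH22: "sinner (aroot 2 \<odot> pseudoI) (aroot 2 \<odot> pseudoI) = (1)"
  by (simp add: w_13213213 w_12 aI3 aI2 w_23 w_11 w_321321323123 aI1 sinner_M field_simps tau_sq tau_sq2)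

lemma sH23: "sinner (aroot 2 \<odot> pseudoI) (aroot 3 \<odot> pseudoI) = (- 1/2 * tau)"
  by (simp add: w_13213213 w_12 aI3 aI2 w_23 w_11 w_321321323123 aI1 sinner_M field_simps tau_sq tau_sq2)

lemma sH30: "sinner (aroot 3 \<odot> pseudoI) (aword [1,1]) = 0"
  by (simp add: w_13213213 w_12 aI3 aI2 w_23 w_11 w_321321323123 aI1 sinner_M field_simps tau_sq tau_sq2)

lemma sH31: "sinner (aroot 3 \<odot> pseudoI) (aword [2,3]) = 0"
  by (simp add: w_13213213 w_12 aI3 aI2 w_23 w_11 w_321321323123 aI1 sinner_M field_simps tau_sq tau_sq2)

lemma sH32: "sinner (aroot 3 \<odot> pseudoI) (aroot 2 \<odot> pseudoI) = (- 1/2 * tau)"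
  by (simp add: w_13213213 w_12 aI3 aI2 w_23 w_11 w_321321323123 aI1 sinner_M field_simps tau_sq tau_sq2)

lemma sH33: "sinner (aroot 3 \<odot> pseudoI) (aroot 3 \<odot> pseudoI) = (1)"
  by (simp add: w_13213213 w_12 aI3 aI2 w_23 w_11 w_321321323123 aI1 sinner_M field_simps tau_sq tau_sq2)

lemma sF00: "sinner (aword [1,1]) (aword [1,1]) = (1)"
  by (simp add: w_13213213 w_12 aI3 aI2 w_23 w_11 w_321321323123 aI1 sinner_M field_simps tau_sq tau_sq2)

lemma sF01: "sinner (aword [1,1]) (aword [1,2]) = (- 1/2)"
  by (simp add: w_13213213 w_12 aI3 aI2 w_23 w_11 w_321321323123 aI1 sinner_M field_simps tau_sq tau_sq2)

lemma sF02: "sinner (aword [1,1]) (aword [1,3,2,1,3,2,1,3]) = 0"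
  by (simp add: w_13213213 w_12 aI3 aI2 w_23 w_11 w_321321323123 aI1 sinner_M field_simps tau_sq tau_sq2)

lemma sF03: "sinner (aword [1,1]) (aword [3,2,1,3,2,1,3,2,3,1,2,3]) = 0"
  by (simp add: w_13213213 w_12 aI3 aI2 w_23 w_11 w_321321323123 aI1 sinner_M field_simps tau_sq tau_sq2)

lemma sF10: "sinner (aword [1,2]) (aword [1,1]) = (- 1/2)"
  by (simp add: w_13213213 w_12 aI3 aI2 w_23 w_11 w_321321323123 aI1 sinner_M field_simps tau_sq tau_sq2)

lemma sF11: "sinner (aword [1,2]) (aword [1,2]) = (1)"
  by (simp add: w_13213213 w_12 aI3 aI2 w_23 w_11 w_321321323123 aI1 sinner_M field_simps tau_sq tau_sq2)

lemma sF12: "sinner (aword [1,2]) (aword [1,3,2,1,3,2,1,3]) = (- 1/2)"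
  by (simp add: w_13213213 w_12 aI3 aI2 w_23 w_11 w_321321323123 aI1 sinner_M field_simps tau_sq tau_sq2)

lemma sF13: "sinner (aword [1,2]) (aword [3,2,1,3,2,1,3,2,3,1,2,3]) = 0"
  by (simp add: w_13213213 w_12 aI3 aI2 w_23 w_11 w_321321323123 aI1 sinner_M field_simps tau_sq tau_sq2)

lemma sF20: "sinner (aword [1,3,2,1,3,2,1,3]) (aword [1,1]) = 0"
  by (simp add: w_13213213 w_12 aI3 aI2 w_23 w_11 w_321321323123 aI1 sinner_M field_simps tau_sq tau_sq2)

lemma sF21: "sinner (aword [1,3,2,1,3,2,1,3]) (aword [1,2]) = (- 1/2)"
  by (simp add: w_13213213 w_12 aI3 aI2 w_23 w_11 w_321321323123 aI1 sinner_M field_simps tau_sq tau_sq2)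

lemma sF22: "sinner (aword [1,3,2,1,3,2,1,3]) (aword [1,3,2,1,3,2,1,3]) = (1)"
  by (simp add: w_13213213 w_12 aI3 aI2 w_23 w_11 w_321321323123 aI1 sinner_M field_simps tau_sq tau_sq2)

lemma sF23: "sinner (aword [1,3,2,1,3,2,1,3]) (aword [3,2,1,3,2,1,3,2,3,1,2,3]) = (- 1/2)"
  by (simp add: w_13213213 w_12 aI3 aI2 w_23 w_11 w_321321323123 aI1 sinner_M field_simps tau_sq tau_sq2)

lemma sF30: "sinner (aword [3,2,1,3,2,1,3,2,3,1,2,3]) (aword [1,1]) = 0"
  by (simp add: w_13213213 w_12 aI3 aI2 w_23 w_11 w_321321323123 aI1 sinner_M field_simps tau_sq tau_sq2)

lemma sF31: "sinner (aword [3,2,1,3,2,1,3,2,3,1,2,3]) (aword [1,2]) = 0"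
  by (simp add: w_13213213 w_12 aI3 aI2 w_23 w_11 w_321321323123 aI1 sinner_M field_simps tau_sq tau_sq2)

lemma sF32: "sinner (aword [3,2,1,3,2,1,3,2,3,1,2,3]) (aword [1,3,2,1,3,2,1,3]) = (- 1/2)"
  by (simp add: w_13213213 w_12 aI3 aI2 w_23 w_11 w_321321323123 aI1 sinner_M field_simps tau_sq tau_sq2)

lemma sF33: "sinner (aword [3,2,1,3,2,1,3,2,3,1,2,3]) (aword [3,2,1,3,2,1,3,2,3,1,2,3]) = (1)"
  by (simp add: w_13213213 w_12 aI3 aI2 w_23 w_11 w_321321323123 aI1 sinner_M field_simps tau_sq tau_sq2)

theorem mainTheorem5:
  shows "aword [1,1] = mv_one
    \<and> simple_roots_of_type_in_2I
        (\<lambda>i. [aword [1,1], aword [1,2], aroot 1 \<odot> pseudoI, aroot 2 \<odot> pseudoI] ! i) cartan_A2A2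
    \<and> simple_roots_of_type_in_2I
        (\<lambda>i. [aword [1,1], aword [2,3], aroot 2 \<odot> pseudoI, aroot 3 \<odot> pseudoI] ! i) cartan_H2H2
    \<and> simple_roots_of_type_in_2I
        (\<lambda>i. [aword [1,1], aword [1,2], aword [1,3,2,1,3,2,1,3],
              aword [3,2,1,3,2,1,3,2,3,1,2,3]] ! i) cartan_A4"
proof (intro conjI)
  show "aword [1,1] = mv_one" by (simp add: w_11 one_M)
next
  show "simple_roots_of_type_in_2I
        (\<lambda>i. [aword [1,1], aword [1,2], aroot 1 \<odot> pseudoI, aroot 2 \<odot> pseudoI] ! i) cartan_A2A2"
    unfolding simple_roots_of_type_in_2I_def
  proof (intro conjI exI[of _ id])
    show "\<forall>i<4. [aword [1,1], aword [1,2], aroot 1 \<odot> pseudoI, aroot 2 \<odot> pseudoI] ! i \<in> spinors"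
      by (simp add: all4 w_11 w_12 aI1 aI2 spinor_M)
    show "id permutes {0..<4::nat}" by (rule permutes_id)
    show "\<forall>i<4. \<forall>j<4. cartan (\<lambda>i. [aword [1,1], aword [1,2], aroot 1 \<odot> pseudoI, aroot 2 \<odot> pseudoI] ! i) (id i) (id j) = cartan_A2A2 i j"
      by (simp add: all4 cartan_def cartan_A2A2_def sA00 sA01 sA02 sA03 sA10 sA11 sA12 sA13 sA20 sA21 sA22 sA23 sA30 sA31 sA32 sA33 doubleton_eq_iff)
    show "gen_roots ((\<lambda>i. [aword [1,1], aword [1,2], aroot 1 \<odot> pseudoI, aroot 2 \<odot> pseudoI] ! i) ` {0..<4}) \<subseteq> binicos"
      by (rule gen_roots_sub) (simp add: img4 aword_bin aI1_bin aI2_bin)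
  qed
next
  show "simple_roots_of_type_in_2I
        (\<lambda>i. [aword [1,1], aword [2,3], aroot 2 \<odot> pseudoI, aroot 3 \<odot> pseudoI] ! i) cartan_H2H2"
    unfolding simple_roots_of_type_in_2I_def
  proof (intro conjI exI[of _ id])
    show "\<forall>i<4. [aword [1,1], aword [2,3], aroot 2 \<odot> pseudoI, aroot 3 \<odot> pseudoI] ! i \<in> spinors"
      by (simp add: all4 w_11 w_23 aI2 aI3 spinor_M)
    show "id permutes {0..<4::nat}" by (rule permutes_id)
    show "\<forall>i<4. \<forall>j<4. cartan (\<lambda>i. [aword [1,1], aword [2,3], aroot 2 \<odot> pseudoI, aroot 3 \<odot> pseudoI] ! i) (id i) (id j) = cartan_H2H2 i j"
      by (simp add: all4 cartan_def cartan_H2H2_def sH00 sH01 sH02 sH03 sH10 sH11 sH12 sH13 sH20 sH21 sH22 sH23 sH30 sH31 sH32 sH33 doubleton_eq_iff)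
    show "gen_roots ((\<lambda>i. [aword [1,1], aword [2,3], aroot 2 \<odot> pseudoI, aroot 3 \<odot> pseudoI] ! i) ` {0..<4}) \<subseteq> binicos"
      by (rule gen_roots_sub) (simp add: img4 aword_bin aI2_bin aI3_bin)
  qed
next
  show "simple_roots_of_type_in_2I
        (\<lambda>i. [aword [1,1], aword [1,2], aword [1,3,2,1,3,2,1,3],
              aword [3,2,1,3,2,1,3,2,3,1,2,3]] ! i) cartan_A4"
    unfolding simple_roots_of_type_in_2I_def
  proof (intro conjI exI[of _ id])
    show "\<forall>i<4. [aword [1,1], aword [1,2], aword [1,3,2,1,3,2,1,3],
              aword [3,2,1,3,2,1,3,2,3,1,2,3]] ! i \<in> spinors"
      by (simp add: all4 w_11 w_12 w_13213213 w_321321323123 spinor_M)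
    show "id permutes {0..<4::nat}" by (rule permutes_id)
    show "\<forall>i<4. \<forall>j<4. cartan (\<lambda>i. [aword [1,1], aword [1,2], aword [1,3,2,1,3,2,1,3],
              aword [3,2,1,3,2,1,3,2,3,1,2,3]] ! i) (id i) (id j) = cartan_A4 i j"
      by (simp add: all4 cartan_def cartan_A4_def sF00 sF01 sF02 sF03 sF10 sF11 sF12 sF13 sF20 sF21 sF22 sF23 sF30 sF31 sF32 sF33)
    show "gen_roots ((\<lambda>i. [aword [1,1], aword [1,2], aword [1,3,2,1,3,2,1,3],
              aword [3,2,1,3,2,1,3,2,3,1,2,3]] ! i) ` {0..<4}) \<subseteq> binicos"
      by (rule gen_roots_sub) (simp add: img4 aword_bin)
  qed
qed

end
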